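(* Let $(E\to M,\rho,\langle\cdot,\cdot\rangle,\circ)$ be a Courant algebroid and $(\mathbf I,\mathbf J,\mathbf K)$ an almost hypercomplex structure on $E$. Then each of the following formulas defines a hypercomplex connection: $$\nabla_XY=-\tfrac12\mathbf K\big(\mathbf JY\circ\mathbf IX-\mathbf J(Y\circ\mathbf IX)-\mathbf I(\mathbf JY\circ X)+\mathbf J\mathbf I(Y\circ X)\big),$$ $$\nabla'_XY=-\tfrac12\mathbf I\big(\mathbf KY\circ\mathbf JX-\mathbf K(Y\circ\mathbf JX)-\mathbf J(\mathbf KY\circ X)+\mathbf K\mathbf J(Y\circ X)\big),$$ $$\nabla''_XY=-\tfrac12\mathbf J\big(\mathbf IY\circ\mathbf KX-\mathbf I(Y\circ\mathbf KX)-\mathbf K(\mathbf IY\circ X)+\mathbf I\mathbf K(Y\circ X)\big),$$ for $X,Y\in\Gamma(E)$.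
   Context: A Courant algebroid $(E\to M,\rho,\langle\cdot,\cdot\rangle,\circ)$ consists of a real vector bundle $E\to M$ over a smooth manifold, a nondegenerate symmetric fiberwise bilinear pairing $\langle\cdot,\cdot\rangle$ on $E$, a vector bundle map $\rho:E\to TM$ (the anchor), and an $\mathbb R$-bilinear operation $\circ$ on $\Gamma(E)$ (the Dorfman bracket) such that for all $f\in C^\infty(M)$, $x,y,z\in\Gamma(E)$: $x\circ(y\circ z)=(x\circ y)\circ z+y\circ(x\circ z)$; $\rho(x\circ y)=[\rho(x),\rho(y)]$; $x\circ(fy)=(\rho(x)f)y+f(x\circ y)$; $x\circ y+y\circ x=2D\langle x,y\rangle$; $(Df)\circ x=0$; $\rho(x)\langle y,z\rangle=\langle x\circ y,z\rangle+\langle y,x\circ z\rangle$. Here $D:C^\infty(M)\to\Gamma(E)$ is the $\mathbb R$-linear map defined by $\langle Df,x\rangle=\tfrac12\rho(x)f$. An almost hypercomplex structure on $E$ is a triple $(\mathbf I,\mathbf J,\mathbf K)$ of vector bundle endomorphisms of $E$ over $\mathrm{id}_M$, each orthogonal for $\langle\cdot,\cdot\rangle$, with $\mathbf I^2=\mathbf J^2=\mathbf K^2=\mathbf I\mathbf J\mathbf K=-1$. Given an almost hypercomplex structure, for $f\in C^\infty(M)$ and $X,Y\in\Gamma(E)$ set $\Delta_f(X,Y)=\langle X,Y\rangle Df+\langle\mathbf IX,Y\rangle\mathbf I Df+\langle\mathbf JX,Y\rangle\mathbf JDf+\langle\mathbf KX,Y\rangle\mathbf KDf$. A hypercomplex connection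 is an $\mathbb R$-bilinear map $\Gamma(E)\times\Gamma(E)\to\Gamma(E)$, $(X,Y)\mapsto\nabla_XY$, with $\nabla_{fX}Y=f\nabla_XY$ and $\nabla_X(fY)=(\rho(X)f)Y+f\nabla_XY-\Delta_f(X,Y)$ for all $f\in C^\infty(M)$, $X,Y\in\Gamma(E)$. *)

theory Defs
  imports Complex_Main
begin

text \<open>Algebraic (Roytenberg-style) rendering of a Courant algebroid.
  'f plays the role of the commutative real algebra C^\<infinity>(M);
  'e plays the role of the C^\<infinity>(M)-module of sections \<Gamma>(E);
  sm is the multiplication of sections by functions.
  Vector bundle maps over id_M correspond to C^\<infinity>(M)-linear maps of sections.\<close>

definition func_module ::
  "('f::{comm_ring_1,real_algebra_1} \<Rightarrow> 'e::ab_group_add \<Rightarrow> 'e) \<Rightarrow> bool" where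
  "func_module sm \<longleftrightarrow>
     (\<forall>f x y. sm f (x + y) = sm f x + sm f y) \<and>
     (\<forall>f g x. sm (f + g) x = sm f x + sm g x) \<and>
     (\<forall>f g x. sm (f * g) x = sm f (sm g x)) \<and>
     (\<forall>x. sm 1 x = x)"

definition courant_algebroid ::
  "('f::{comm_ring_1,real_algebra_1} \<Rightarrow> 'e::ab_group_add \<Rightarrow> 'e) \<Rightarrow>
   ('e \<Rightarrow> 'e \<Rightarrow> 'f) \<Rightarrow> ('e \<Rightarrow> 'f \<Rightarrow> 'f) \<Rightarrow> ('e \<Rightarrow> 'e \<Rightarrow> 'e) \<Rightarrow>
   ('f \<Rightarrow> 'e) \<Rightarrow> bool" where
  "courant_algebroid sm ip rho dorf D \<longleftrightarrow>
     func_module sm \<and>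
     \<comment> \<open>pairing: symmetric, C-bilinear, nondegenerate\<close>
     (\<forall>x y. ip x y = ip y x) \<and>
     (\<forall>x y z. ip (x + y) z = ip x z + ip y z) \<and>
     (\<forall>f x y. ip (sm f x) y = f * ip x y) \<and>
     (\<forall>x. (\<forall>y. ip x y = 0) \<longrightarrow> x = 0) \<and>
     \<comment> \<open>anchor: a C-linear map to vector fields (R-linear derivations of 'f)\<close>
     (\<forall>x y f. rho (x + y) f = rho x f + rho y f) \<and>
     (\<forall>g x f. rho (sm g x) f = g * rho x f) \<and>
     (\<forall>x f g. rho x (f + g) = rho x f + rho x g) \<and>
     (\<forall>x a f. rho x (a *\<^sub>R f) = a *\<^sub>R rho x f) \<and>
     (\<forall>x f g. rho x (f * g) = rho x f * g + f * rho x g) \<and>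
     \<comment> \<open>Dorfman bracket: R-bilinear\<close>
     (\<forall>x y z. dorf (x + y) z = dorf x z + dorf y z) \<and>
     (\<forall>x y z. dorf x (y + z) = dorf x y + dorf x z) \<and>
     (\<forall>a x y. dorf (sm (of_real a) x) y = sm (of_real a) (dorf x y)) \<and>
     (\<forall>a x y. dorf x (sm (of_real a) y) = sm (of_real a) (dorf x y)) \<and>
     \<comment> \<open>D defined by <Df,x> = 1/2 rho(x) f\<close>
     (\<forall>f x. ip (D f) x = of_real (1/2) * rho x f) \<and>
     \<comment> \<open>Courant algebroid axioms\<close>
     (\<forall>x y z. dorf x (dorf y z) = dorf (dorf x y) z + dorf y (dorf x z)) \<and>
     (\<forall>x y f. rho (dorf x y) f = rho x (rho y f) - rho y (rho x f)) \<and>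
     (\<forall>x f y. dorf x (sm f y) = sm (rho x f) y + sm f (dorf x y)) \<and>
     (\<forall>x y. dorf x y + dorf y x = sm (of_real 2) (D (ip x y))) \<and>
     (\<forall>f x. dorf (D f) x = 0) \<and>
     (\<forall>x y z. rho x (ip y z) = ip (dorf x y) z + ip y (dorf x z))"

definition bundle_endo ::
  "('f::{comm_ring_1,real_algebra_1} \<Rightarrow> 'e::ab_group_add \<Rightarrow> 'e) \<Rightarrow> ('e \<Rightarrow> 'e) \<Rightarrow> bool" where
  "bundle_endo sm A \<longleftrightarrow> (\<forall>x y. A (x + y) = A x + A y) \<and> (\<forall>f x. A (sm f x) = sm f (A x))"

definition orthogonal_endo :: "('e \<Rightarrow> 'e \<Rightarrow> 'f) \<Rightarrow> ('e \<Rightarrow> 'e) \<Rightarrow> bool" where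
  "orthogonal_endo ip A \<longleftrightarrow> (\<forall>x y. ip (A x) (A y) = ip x y)"

definition almost_hypercomplex ::
  "('f::{comm_ring_1,real_algebra_1} \<Rightarrow> 'e::ab_group_add \<Rightarrow> 'e) \<Rightarrow> ('e \<Rightarrow> 'e \<Rightarrow> 'f) \<Rightarrow>
   ('e \<Rightarrow> 'e) \<Rightarrow> ('e \<Rightarrow> 'e) \<Rightarrow> ('e \<Rightarrow> 'e) \<Rightarrow> bool" where
  "almost_hypercomplex sm ip I J K \<longleftrightarrow>
     bundle_endo sm I \<and> bundle_endo sm J \<and> bundle_endo sm K \<and>
     orthogonal_endo ip I \<and> orthogonal_endo ip J \<and> orthogonal_endo ip K \<and>
     (\<forall>x. I (I x) = - x) \<and> (\<forall>x. J (J x) = - x) \<and> (\<forall>x. K (K x) = - x) \<and>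
     (\<forall>x. I (J (K x)) = - x)"

definition Delta ::
  "('f::{comm_ring_1,real_algebra_1} \<Rightarrow> 'e::ab_group_add \<Rightarrow> 'e) \<Rightarrow> ('e \<Rightarrow> 'e \<Rightarrow> 'f) \<Rightarrow>
   ('f \<Rightarrow> 'e) \<Rightarrow> ('e \<Rightarrow> 'e) \<Rightarrow> ('e \<Rightarrow> 'e) \<Rightarrow> ('e \<Rightarrow> 'e) \<Rightarrow> 'f \<Rightarrow> 'e \<Rightarrow> 'e \<Rightarrow> 'e" where
  "Delta sm ip D I J K f X Y =
     sm (ip X Y) (D f) + sm (ip (I X) Y) (I (D f)) + sm (ip (J X) Y) (J (D f))
     + sm (ip (K X) Y) (K (D f))"

definition hypercomplex_connection ::
  "('f::{comm_ring_1,real_algebra_1} \<Rightarrow> 'e::ab_group_add \<Rightarrow> 'e) \<Rightarrow> ('e \<Rightarrow> 'e \<Rightarrow> 'f) \<Rightarrow>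
   ('e \<Rightarrow> 'f \<Rightarrow> 'f) \<Rightarrow> ('f \<Rightarrow> 'e) \<Rightarrow> ('e \<Rightarrow> 'e) \<Rightarrow> ('e \<Rightarrow> 'e) \<Rightarrow> ('e \<Rightarrow> 'e) \<Rightarrow>
   ('e \<Rightarrow> 'e \<Rightarrow> 'e) \<Rightarrow> bool" where
  "hypercomplex_connection sm ip rho D I J K nabla \<longleftrightarrow>
     \<comment> \<open>R-bilinear\<close>
     (\<forall>X Y Z. nabla (X + Y) Z = nabla X Z + nabla Y Z) \<and>
     (\<forall>X Y Z. nabla X (Y + Z) = nabla X Y + nabla X Z) \<and>
     (\<forall>a X Y. nabla (sm (of_real a) X) Y = sm (of_real a) (nabla X Y)) \<and>
     (\<forall>a X Y. nabla X (sm (of_real a) Y) = sm (of_real a) (nabla X Y)) \<and>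
     \<comment> \<open>connection rules\<close>
     (\<forall>f X Y. nabla (sm f X) Y = sm f (nabla X Y)) \<and>
     (\<forall>f X Y. nabla X (sm f Y) = sm (rho X f) Y + sm f (nabla X Y) - Delta sm ip D I J K f X Y)"

end

theory Submission imports Defs begin

locale CAH =
  fixes sm :: "'f::{comm_ring_1,real_algebra_1} \<Rightarrow> 'e::ab_group_add \<Rightarrow> 'e"
    and ip :: "'e \<Rightarrow> 'e \<Rightarrow> 'f" and rho :: "'e \<Rightarrow> 'f \<Rightarrow> 'f"
    and dorf :: "'e \<Rightarrow> 'e \<Rightarrow> 'e" and D :: "'f \<Rightarrow> 'e"
    and I J K :: "'e \<Rightarrow> 'e"
  assumes CA: "courant_algebroid sm ip rho dorf D"
    and AH: "almost_hypercomplex sm ip I J K"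
begin

lemma sm_add_r: "sm f (x + y) = sm f x + sm f y" using CA unfolding courant_algebroid_def func_module_def by (elim conjE) iprover
lemma sm_add_l: "sm (f + g) x = sm f x + sm g x" using CA unfolding courant_algebroid_def func_module_def by (elim conjE) iprover
lemma sm_mult: "sm (f * g) x = sm f (sm g x)" using CA unfolding courant_algebroid_def func_module_def by (elim conjE) iprover
lemma sm_one: "sm 1 x = x" using CA unfolding courant_algebroid_def func_module_def by (elim conjE) iprover
lemma sm_zero_l: "sm 0 x = 0" using sm_add_l[of 0 0 x] by simp
lemma sm_zero_r: "sm f 0 = 0" using sm_add_r[of f 0 0] by simp
lemma sm_minus_r: "sm f (- x) = - sm f x" using sm_add_r[of f x "-x"] sm_zero_r add_eq_0_iff[of "sm f x" "sm f (-x)"] by simp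
lemma sm_minus_l: "sm (- f) x = - sm f x" using sm_add_l[of f "-f" x] sm_zero_l add_eq_0_iff[of "sm f x" "sm (-f) x"] by simp
lemma sm_diff_r: "sm f (x - y) = sm f x - sm f y" using sm_add_r[of f x "-y"] sm_minus_r by simp
lemma sm_diff_l: "sm (f - g) x = sm f x - sm g x" using sm_add_l[of f "-g" x] sm_minus_l by simp
lemma sm_comm: "sm f (sm g x) = sm g (sm f x)" by (metis sm_mult mult.commute)

lemma ip_sym: "ip x y = ip y x" using CA unfolding courant_algebroid_def by (elim conjE) iprover
lemma ip_add_l: "ip (x + y) z = ip x z + ip y z" using CA unfolding courant_algebroid_def by (elim conjE) iprover
lemma ip_sm_l: "ip (sm f x) y = f * ip x y" using CA unfolding courant_algebroid_def by (elim conjE) iprover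
lemma ip_nondeg: "(\<And>y. ip x y = 0) \<Longrightarrow> x = 0" using CA unfolding courant_algebroid_def by (elim conjE) iprover
lemma ip_zero_l: "ip 0 z = 0" using ip_add_l[of 0 0 z] by simp
lemma ip_minus_l: "ip (- x) z = - ip x z" using ip_add_l[of x "-x" z] ip_zero_l add_eq_0_iff[of "ip x z" "ip (-x) z"] by simp
lemma ip_diff_l: "ip (x - y) z = ip x z - ip y z" using ip_add_l[of x "-y" z] ip_minus_l by simp

lemma rho_sm: "rho (sm g x) f = g * rho x f" using CA unfolding courant_algebroid_def by (elim conjE) iprover
lemma rho_mult: "rho x (f * g) = rho x f * g + f * rho x g" using CA unfolding courant_algebroid_def by (elim conjE) iprover
lemma dorf_add_l: "dorf (x + y) z = dorf x z + dorf y z" using CA unfolding courant_algebroid_def by (elim conjE) iprover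
lemma dorf_add_r: "dorf x (y + z) = dorf x y + dorf x z" using CA unfolding courant_algebroid_def by (elim conjE) iprover
lemma dorf_real_l: "dorf (sm (of_real a) x) y = sm (of_real a) (dorf x y)" using CA unfolding courant_algebroid_def by (elim conjE) iprover
lemma dorf_real_r: "dorf x (sm (of_real a) y) = sm (of_real a) (dorf x y)" using CA unfolding courant_algebroid_def by (elim conjE) iprover
lemma D_ip: "ip (D f) x = of_real (1/2) * rho x f" using CA unfolding courant_algebroid_def by (elim conjE) iprover
lemma leib: "dorf x (sm f y) = sm (rho x f) y + sm f (dorf x y)" using CA unfolding courant_algebroid_def by (elim conjE) iprover
lemma symm: "dorf x y + dorf y x = sm (of_real 2) (D (ip x y))" using CA unfolding courant_algebroid_def by (elim conjE) iprover

lemma dorf_zero_l: "dorf 0 z = 0" using dorf_add_l[of 0 0 z] by simp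
lemma dorf_minus_l: "dorf (- x) z = - dorf x z" using dorf_add_l[of x "-x" z] dorf_zero_l add_eq_0_iff[of "dorf x z" "dorf (-x) z"] by simp
lemma dorf_zero_r: "dorf z 0 = 0" using dorf_add_r[of z 0 0] by simp
lemma dorf_minus_r: "dorf z (- x) = - dorf z x" using dorf_add_r[of z x "-x"] dorf_zero_r add_eq_0_iff[of "dorf z x" "dorf z (-x)"] by simp
lemma dorf_diff_l: "dorf (x - y) z = dorf x z - dorf y z" using dorf_add_l[of x "-y" z] dorf_minus_l by simp
lemma dorf_diff_r: "dorf z (x - y) = dorf z x - dorf z y" using dorf_add_r[of z x "-y"] dorf_minus_r by simp

lemma D_mult: "D (f * g) = sm f (D g) + sm g (D f)"
proof -
  have "ip (D (f * g) - (sm f (D g) + sm g (D f))) z = 0" for z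
    by (simp add: ip_diff_l ip_add_l ip_sm_l D_ip rho_mult algebra_simps)
  then show ?thesis using ip_nondeg by (metis eq_iff_diff_eq_0)
qed

lemma two': "sm 2 x = x + x"
  by (metis one_add_one sm_add_l sm_one)
lemma two: "sm (of_real 2) x = x + x"
  using two' by simp

lemma leib_l: "dorf (sm f x) y = sm f (dorf x y) - sm (rho y f) x + sm 2 (sm (ip x y) (D f))"
proof -
  have a: "dorf (sm f x) y = sm (of_real 2) (D (ip (sm f x) y)) - dorf y (sm f x)"
    using symm[of "sm f x" y] by (simp add: eq_diff_eq)
  have b: "dorf y x = sm (of_real 2) (D (ip x y)) - dorf x y"
    using symm[of y x] ip_sym[of y x] by (simp add: eq_diff_eq)
  show ?thesis unfolding a leib b ip_sm_l D_mult two two'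
    by (simp add: sm_add_r sm_diff_r sm_add_l algebra_simps)
qed


lemma be_I: "bundle_endo sm I" and be_J: "bundle_endo sm J" and be_K: "bundle_endo sm K"
  and or_I: "orthogonal_endo ip I" and or_J: "orthogonal_endo ip J" and or_K: "orthogonal_endo ip K"
  and II: "I (I x) = - x" and JJ: "J (J x) = - x" and KK: "K (K x) = - x" and IJK: "I (J (K x)) = - x"
  using AH unfolding almost_hypercomplex_def by auto

lemma endo_add: "bundle_endo sm A \<Longrightarrow> A (x + y) = A x + A y" unfolding bundle_endo_def by blast
lemma endo_sm: "bundle_endo sm A \<Longrightarrow> A (sm f x) = sm f (A x)" unfolding bundle_endo_def by blast
lemma endo_zero: "bundle_endo sm A \<Longrightarrow> A 0 = 0" using endo_add[of A 0 0] by simp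
lemma endo_minus: "bundle_endo sm A \<Longrightarrow> A (- x) = - A x"
  using endo_add[of A x "-x"] endo_zero[of A] add_eq_0_iff[of "A x" "A (-x)"] by simp
lemma endo_diff: "bundle_endo sm A \<Longrightarrow> A (x - y) = A x - A y"
  using endo_add[of A x "-y"] endo_minus[of A y] by simp

lemmas I_simps = endo_add[OF be_I] endo_sm[OF be_I] endo_minus[OF be_I] endo_diff[OF be_I]
lemmas J_simps = endo_add[OF be_J] endo_sm[OF be_J] endo_minus[OF be_J] endo_diff[OF be_J]
lemmas K_simps = endo_add[OF be_K] endo_sm[OF be_K] endo_minus[OF be_K] endo_diff[OF be_K]

lemma JK: "J (K x) = I x"
proof -
  have "I (I (J (K x))) = - J (K x)" by (rule II)
  also have "I (I (J (K x))) = - I x" using IJK[of x] I_simps by simp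
  finally show ?thesis by simp
qed
lemma JI: "J (I x) = - K x"
proof -
  have "J (I x) = J (J (K x))" by (simp only: JK)
  also have "\<dots> = - K x" by (rule JJ)
  finally show ?thesis .
qed
lemma IK: "I (K x) = - J x"
proof -
  have "I (K x) = J (K (K x))" by (simp only: JK)
  also have "\<dots> = - J x" by (simp add: KK J_simps)
  finally show ?thesis .
qed
lemma IJ: "I (J x) = K x"
proof -
  have "I (J x) = I (- I (K x))" by (simp only: IK minus_minus)
  also have "\<dots> = K x" by (simp add: I_simps II)
  finally show ?thesis .
qed
lemma KI: "K (I x) = J x"
proof -
  have "I (K (I x)) = K x" using IK[of "I x"] JI[of x] by simp
  hence "I (I (K (I x))) = I (K x)" by simp
  hence "- K (I x) = - J x" unfolding II[of "K (I x)"] IK[of x] .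
  thus ?thesis by simp
qed
lemma KJ: "K (J x) = - I x"
proof -
  have "J (K (J x)) = K x" using JK[of "J x"] IJ[of x] by simp
  hence "J (J (K (J x))) = J (K x)" by simp
  hence "- K (J x) = I x" unfolding JJ[of "K (J x)"] JK[of x] .
  from this[symmetric] show ?thesis by simp
qed

lemma AH_cyc: "almost_hypercomplex sm ip J K I"
  unfolding almost_hypercomplex_def proof (intro conjI allI)
  show "J (K (I x)) = - x" for x using JK[of "I x"] II[of x] by (rule trans)
qed (rule be_I be_J be_K or_I or_J or_K II JJ KK)+


end
context CAH begin
lemma ip_minus_r: "ip z (- x) = - ip z x" using ip_minus_l ip_sym by metis

lemma a1: "ip (J Y) (I X) = ip (K X) Y"
proof -
  have "ip (J Y) (I X) = ip (J (J Y)) (J (I X))" using or_J unfolding orthogonal_endo_def by simp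
  also have "\<dots> = ip Y (K X)" by (simp add: JJ JI ip_minus_l ip_minus_r)
  finally show ?thesis by (simp add: ip_sym)
qed
lemma a3: "ip (J Y) X = - ip (J X) Y"
proof -
  have "ip (J Y) X = ip (J (J Y)) (J X)" using or_J unfolding orthogonal_endo_def by simp
  also have "\<dots> = - ip Y (J X)" by (simp add: JJ ip_minus_l)
  finally show ?thesis by (simp add: ip_sym)
qed

definition inner where
  "inner X Y = dorf (J Y) (I X) - J (dorf Y (I X)) - I (dorf (J Y) X) + J (I (dorf Y X))"
definition nab where "nab X Y = sm (of_real (-1/2)) (K (inner X Y))"

lemma half: "sm (of_real (-1/2)) (sm 2 z) = - z"
proof -
  have "(of_real (-1/2) :: 'f) * 2 = of_real ((-1/2) * 2)" by (simp only: of_real_mult of_real_numeral)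
  also have "\<dots> = -1" by simp
  finally show ?thesis using sm_mult[of "of_real (-1/2)" 2 z] sm_minus_l[of 1 z] sm_one[of z] by simp
qed

lemma grp2: "((a::'a::ab_group_add) + a') - (b + b') - (c + c') + (d + d') = (a - b - c + d) + (a' - b' - c' + d')"
  by (simp add: algebra_simps)
lemma grp3: "((u::'a::ab_group_add) + a) - (v + b) - (u + c) + (v + d) = a - b - c + d"
  by (simp add: algebra_simps)

lemma inner_add_l: "inner (X + X') Y = inner X Y + inner X' Y"
  unfolding inner_def I_simps J_simps dorf_add_l dorf_add_r by (rule grp2)
lemma inner_add_r: "inner X (Y + Y') = inner X Y + inner X Y'"
  unfolding inner_def I_simps J_simps dorf_add_l dorf_add_r by (rule grp2)
lemma inner_real_r: "inner X (sm (of_real a) Y) = sm (of_real a) (inner X Y)"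
  unfolding inner_def I_simps J_simps dorf_real_l dorf_real_r sm_add_r sm_diff_r ..
lemma inner_sm_l: "inner (sm f X) Y = sm f (inner X Y)"
  unfolding inner_def I_simps J_simps leib sm_add_r sm_diff_r by (rule grp3)

lemma grp: "((a::'a::ab_group_add) - v + p1) - (b - v + p2) - (c - w + p3) + (d + w + p4)
   = (a - b - c + d) + (w + w + p1 - p2 - p3 + p4)"
  by (simp add: algebra_simps)

lemma inner_sm_r: "inner X (sm f Y) = sm f (inner X Y) +
   sm 2 (sm (rho X f) (K Y) + sm (ip (J Y) (I X)) (D f) - sm (ip Y (I X)) (J (D f))
         - sm (ip (J Y) X) (I (D f)) + sm (ip Y X) (J (I (D f))))"
proof -
  have t1: "dorf (J (sm f Y)) (I X) = sm f (dorf (J Y) (I X)) - sm (rho (I X) f) (J Y) + sm 2 (sm (ip (J Y) (I X)) (D f))"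
    by (simp add: J_simps leib_l)
  have t2: "J (dorf (sm f Y) (I X)) = sm f (J (dorf Y (I X))) - sm (rho (I X) f) (J Y) + sm 2 (sm (ip Y (I X)) (J (D f)))"
    by (simp add: J_simps leib_l)
  have t3: "I (dorf (J (sm f Y)) X) = sm f (I (dorf (J Y) X)) - sm (rho X f) (K Y) + sm 2 (sm (ip (J Y) X) (I (D f)))"
    by (simp add: J_simps I_simps leib_l IJ)
  have t4: "J (I (dorf (sm f Y) X)) = sm f (J (I (dorf Y X))) + sm (rho X f) (K Y) + sm 2 (sm (ip Y X) (J (I (D f))))"
    by (simp add: J_simps I_simps leib_l JI sm_minus_r)
  have e: "sm (2::'f) (sm (rho X f) (K Y) + sm (ip (J Y) (I X)) (D f) - sm (ip Y (I X)) (J (D f))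
         - sm (ip (J Y) X) (I (D f)) + sm (ip Y X) (J (I (D f))))
     = sm (rho X f) (K Y) + sm (rho X f) (K Y) + sm 2 (sm (ip (J Y) (I X)) (D f)) - sm 2 (sm (ip Y (I X)) (J (D f)))
         - sm 2 (sm (ip (J Y) X) (I (D f))) + sm 2 (sm (ip Y X) (J (I (D f))))"
    by (simp only: sm_add_r sm_diff_r two')
  have s: "sm f (inner X Y) = sm f (dorf (J Y) (I X)) - sm f (J (dorf Y (I X))) - sm f (I (dorf (J Y) X)) + sm f (J (I (dorf Y X)))"
    unfolding inner_def by (simp only: sm_add_r sm_diff_r)
  show ?thesis unfolding e s unfolding inner_def t1 t2 t3 t4 by (rule grp)
qed


lemma nab_sm_r: "nab X (sm f Y) = sm (rho X f) Y + sm f (nab X Y) - Delta sm ip D I J K f X Y"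
proof -
  let ?W = "sm (rho X f) (K Y) + sm (ip (J Y) (I X)) (D f) - sm (ip Y (I X)) (J (D f))
         - sm (ip (J Y) X) (I (D f)) + sm (ip Y X) (J (I (D f)))"
  have k: "K ?W = Delta sm ip D I J K f X Y - sm (rho X f) Y"
    unfolding Delta_def a1[of Y X] a3[of Y X]
    by (simp add: K_simps KK KJ KI JI sm_minus_r sm_minus_l ip_sym[of Y X] ip_sym[of Y "I X"] algebra_simps)
  have "nab X (sm f Y) = sm (of_real (-1/2)) (sm f (K (inner X Y))) + sm (of_real (-1/2)) (sm 2 (K ?W))"
    unfolding nab_def inner_sm_r K_simps sm_add_r ..
  also have "\<dots> = sm f (nab X Y) - K ?W"
    unfolding half nab_def sm_comm[of "of_real (-1/2)" f] by simp
  finally show ?thesis unfolding k by (simp add: algebra_simps)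
qed

lemma nab_add_l: "nab (X + Y) Z = nab X Z + nab Y Z"
  unfolding nab_def inner_add_l K_simps sm_add_r ..
lemma nab_add_r: "nab X (Y + Z) = nab X Y + nab X Z"
  unfolding nab_def inner_add_r K_simps sm_add_r ..
lemma nab_sm_l: "nab (sm f X) Y = sm f (nab X Y)"
  unfolding nab_def inner_sm_l K_simps by (rule sm_comm)
lemma nab_real_r: "nab X (sm (of_real a) Y) = sm (of_real a) (nab X Y)"
  unfolding nab_def inner_real_r K_simps by (rule sm_comm)

lemma conn: "hypercomplex_connection sm ip rho D I J K nab"
  unfolding hypercomplex_connection_def
  by (intro conjI allI nab_add_l nab_add_r nab_sm_l nab_real_r nab_sm_r)

end

lemma Delta_cyc: "Delta sm ip D J K I = Delta sm ip D I J K"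
  by (intro ext) (simp add: Delta_def add_ac)

theorem mainTheorem3:
  fixes sm :: "'f::{comm_ring_1,real_algebra_1} \<Rightarrow> 'e::ab_group_add \<Rightarrow> 'e"
    and ip :: "'e \<Rightarrow> 'e \<Rightarrow> 'f" and rho :: "'e \<Rightarrow> 'f \<Rightarrow> 'f"
    and dorf :: "'e \<Rightarrow> 'e \<Rightarrow> 'e" and D :: "'f \<Rightarrow> 'e"
    and I J K :: "'e \<Rightarrow> 'e"
  assumes "courant_algebroid sm ip rho dorf D"
    and "almost_hypercomplex sm ip I J K"
  shows "(hypercomplex_connection sm ip rho D I J K
           (\<lambda>X Y. sm (of_real (-1/2)) (K (dorf (J Y) (I X) - J (dorf Y (I X))
                      - I (dorf (J Y) X) + J (I (dorf Y X)))))) \<and>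
         (hypercomplex_connection sm ip rho D I J K
           (\<lambda>X Y. sm (of_real (-1/2)) (I (dorf (K Y) (J X) - K (dorf Y (J X))
                      - J (dorf (K Y) X) + K (J (dorf Y X)))))) \<and>
         (hypercomplex_connection sm ip rho D I J K
           (\<lambda>X Y. sm (of_real (-1/2)) (J (dorf (I Y) (K X) - I (dorf Y (K X))
                      - K (dorf (I Y) X) + I (K (dorf Y X))))))"
proof -
  interpret A: CAH sm ip rho dorf D I J K using assms by unfold_locales
  interpret B: CAH sm ip rho dorf D J K I using assms(1) A.AH_cyc by unfold_locales
  interpret C: CAH sm ip rho dorf D K I J using assms(1) B.AH_cyc by unfold_locales
  have d1: "Delta sm ip D J K I = Delta sm ip D I J K" by (rule Delta_cyc)
  have d2: "Delta sm ip D K I J = Delta sm ip D I J K" using Delta_cyc[of sm ip D K I J] d1 by simp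
  have c1: "hypercomplex_connection sm ip rho D I J K A.nab" by (rule A.conn)
  have c2: "hypercomplex_connection sm ip rho D I J K B.nab"
    using B.conn unfolding hypercomplex_connection_def d1 .
  have c3: "hypercomplex_connection sm ip rho D I J K C.nab"
    using C.conn unfolding hypercomplex_connection_def d2 .
  have n1: "A.nab = (\<lambda>X Y. sm (of_real (-1/2)) (K (dorf (J Y) (I X) - J (dorf Y (I X))
                      - I (dorf (J Y) X) + J (I (dorf Y X)))))"
    by (intro ext) (simp only: A.nab_def A.inner_def)
  have n2: "B.nab = (\<lambda>X Y. sm (of_real (-1/2)) (I (dorf (K Y) (J X) - K (dorf Y (J X))
                      - J (dorf (K Y) X) + K (J (dorf Y X)))))"
    by (intro ext) (simp only: B.nab_def B.inner_def)
  have n3: "C.nab = (\<lambda>X Y. sm (of_real (-1/2)) (J (dorf (I Y) (K X) - I (dorf Y (K X))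
                      - K (dorf (I Y) X) + I (K (dorf Y X)))))"
    by (intro ext) (simp only: C.nab_def C.inner_def)
  show ?thesis using c1 c2 c3 unfolding n1 n2 n3 by blast
qed

end
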